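(* For every $l\in w_{1+\infty}$, with $\tilde l=\frac12(l-\iota(l))$ its anti-symmetrization, one has $[\hat l^B,\phi(z)]=[\hat{\tilde l}^B,\phi(z)]$.
   Context: Neutral fermions $\{\phi_i\}_{i\in\mathbb{Z}}$ satisfy $[\phi_i,\phi_j]_+=(-1)^i\delta_{i+j,0}$, acting on the Fock space generated from a vacuum $|0\rangle$ with $\phi_i|0\rangle=0$ for $i<0$; $\langle0|\phi_i=0$ for $i>0$, $\langle0|0\rangle=1$, $\langle0|\phi_0|0\rangle=0$. $\phi(z)=\sum_i\phi_iz^i$; $:\!\phi_i\phi_j\!:\,=\phi_i\phi_j-\langle0|\phi_i\phi_j|0\rangle$. $w_{1+\infty}=\mathrm{span}_{\mathbb{C}}\{z^i\partial_z^j\}$ with involution $\iota(z^k(z\partial_z)^m)=(-z\partial_z)^m(-z)^k$. The B-type realization is $\hat l^B=\frac12\mathrm{Res}_w\,w^{-1}:\!\phi(z)\,(l_w\cdot\phi(w))\!:\big|_{z=-w}$. *)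

theory Defs
  imports "HOL-Analysis.Analysis"
begin

text \<open>The Fock space is modelled concretely: the vector
  phi_{n_1} ... phi_{n_r} |0> with n_1 > ... > n_r >= 0 is the basis vector
  indexed by the finite set {n_1,...,n_r} of naturals.\<close>

type_synonym fvec = "nat set \<Rightarrow> complex"

definition fock :: "fvec set" where
  "fock = {v. finite {S. v S \<noteq> 0} \<and> (\<forall>S. v S \<noteq> 0 \<longrightarrow> finite S)}"

definition vac :: fvec where
  "vac = (\<lambda>S. if S = {} then 1 else 0)"

text \<open>Action of phi_n, derived from [phi_i,phi_j]_+ = (-1)^i delta_{i+j,0},
  phi_i |0> = 0 for i < 0.\<close>
definition phi :: "int \<Rightarrow> fvec \<Rightarrow> fvec" where
  "phi n v = (\<lambda>T.
     if n > 0 then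
       (if nat n \<in> T then (-1) ^ card {t\<in>T. t > nat n} * v (T - {nat n}) else 0)
     else if n < 0 then
       (if nat (-n) \<notin> T
        then (-1) ^ card {t\<in>T. t > nat (-n)} * (-1) ^ nat (-n) * v (insert (nat (-n)) T)
        else 0)
     else
       (if 0 \<in> T then (-1) ^ (card T - 1) * v (T - {0})
        else (-1) ^ card T / 2 * v (insert 0 T)))"

text \<open>Vacuum expectation value <0| X |0> = coefficient of |0> in X|0>.\<close>
definition vev2 :: "int \<Rightarrow> int \<Rightarrow> complex" where
  "vev2 i j = phi i (phi j vac) {}"

definition nord :: "int \<Rightarrow> int \<Rightarrow> fvec \<Rightarrow> fvec" where
  "nord i j v = (\<lambda>T. phi i (phi j v) T - vev2 i j * v T)"

definition fcomm :: "(fvec \<Rightarrow> fvec) \<Rightarrow> (fvec \<Rightarrow> fvec) \<Rightarrow> fvec \<Rightarrow> fvec" where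
  "fcomm A B v = (\<lambda>T. A (B v) T - B (A v) T)"

text \<open>A Laurent polynomial sum_n f(n) z^n is its coefficient function.\<close>
type_synonym lpoly = "int \<Rightarrow> complex"

definition mono :: "int \<Rightarrow> lpoly" where
  "mono j = (\<lambda>n. if n = j then 1 else 0)"

definition zpow :: "int \<Rightarrow> lpoly \<Rightarrow> lpoly" where
  "zpow k f = (\<lambda>n. f (n - k))"

text \<open>the Euler operator z d/dz\<close>
definition Dz :: "lpoly \<Rightarrow> lpoly" where
  "Dz f = (\<lambda>n. of_int n * f n)"

definition zD :: "int \<Rightarrow> nat \<Rightarrow> lpoly \<Rightarrow> lpoly" where
  "zD k m = zpow k \<circ> (Dz ^^ m)"

text \<open>iota(z^k (z d/dz)^m) = (- z d/dz)^m (-z)^k\<close>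
definition iota_basis :: "int \<Rightarrow> nat \<Rightarrow> lpoly \<Rightarrow> lpoly" where
  "iota_basis k m = ((\<lambda>f n. - Dz f n) ^^ m) \<circ> (\<lambda>f n. (-1) ^ nat \<bar>k\<bar> * zpow k f n)"

definition wop :: "(int \<times> nat \<Rightarrow> complex) \<Rightarrow> lpoly \<Rightarrow> lpoly" where
  "wop c f = (\<lambda>n. \<Sum>\<^sub>\<infinity>p. c p * zD (fst p) (snd p) f n)"

definition wiota :: "(int \<times> nat \<Rightarrow> complex) \<Rightarrow> lpoly \<Rightarrow> lpoly" where
  "wiota c f = (\<lambda>n. \<Sum>\<^sub>\<infinity>p. c p * iota_basis (fst p) (snd p) f n)"

definition wtilde :: "(int \<times> nat \<Rightarrow> complex) \<Rightarrow> lpoly \<Rightarrow> lpoly" where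
  "wtilde c f = (\<lambda>n. (wop c f n - wiota c f n) / 2)"

text \<open>hat l^B = 1/2 Res_w w^{-1} :phi(z) (l_w . phi(w)):|_{z=-w}.
  Here l_w . phi(w) = sum_j phi_j l(w^j), phi(-w) = sum_i (-1)^i phi_i w^i,
  and Res_w w^{-1} F(w) is the coefficient of w^0 of F, so
  hat l^B = 1/2 sum_{i,j} (-1)^i [w^{-i}](l(w^j)) :phi_i phi_j:,
  the (locally finite) infinite sum taken coefficientwise.\<close>
definition hatB :: "(lpoly \<Rightarrow> lpoly) \<Rightarrow> fvec \<Rightarrow> fvec" where
  "hatB L v = (\<lambda>T. \<Sum>\<^sub>\<infinity>p. (1/2) * (-1) ^ nat \<bar>fst p\<bar> * L (mono (snd p)) (- fst p)
                            * nord (fst p) (snd p) v T)"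

end

theory Submission
  imports Defs
begin


lemma infsum_fin:
  fixes f :: "'a \<Rightarrow> complex"
  assumes "finite F" "\<And>x. x \<notin> F \<Longrightarrow> f x = 0"
  shows "(\<Sum>\<^sub>\<infinity>x. f x) = sum f F"
proof -
  have "(\<Sum>\<^sub>\<infinity>x. f x) = (\<Sum>\<^sub>\<infinity>x\<in>F. f x)"
    by (rule infsum_cong_neutral) (auto simp: assms)
  then show ?thesis using assms by simp
qed

definition sg :: "nat set \<Rightarrow> nat \<Rightarrow> complex" where
  "sg T b = (-1) ^ card {t\<in>T. t > b}"

lemma sg_insert: "finite T \<Longrightarrow> a \<notin> T \<Longrightarrow> sg (insert a T) b = (if b < a then -1 else 1) * sg T b"
proof -
  assume f: "finite T" and a: "a \<notin> T"
  show ?thesis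
  proof (cases "b < a")
    case True
    then have "{t\<in>insert a T. t > b} = insert a {t\<in>T. t > b}" by auto
    then show ?thesis using True f a by (simp add: sg_def)
  next
    case False
    then have "{t\<in>insert a T. t > b} = {t\<in>T. t > b}" by auto
    then show ?thesis using False by (simp add: sg_def)
  qed
qed

lemma sg_remove: "finite T \<Longrightarrow> a \<in> T \<Longrightarrow> sg T b = (if b < a then -1 else 1) * sg (T - {a}) b"
  using sg_insert[of "T - {a}" a b] by (simp add: insert_absorb)

lemma sg_remove': "finite T \<Longrightarrow> a \<in> T \<Longrightarrow> sg (T - {a}) b = (if b < a then -1 else 1) * sg T b"
  using sg_remove[of T a b] by auto

lemma sg_self_insert: "sg (insert a T) a = sg T a"
  unfolding sg_def by (rule arg_cong[where f="\<lambda>S. (-1) ^ card S"]) auto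

lemma sg_self_remove: "sg (T - {a}) a = sg T a"
  unfolding sg_def by (rule arg_cong[where f="\<lambda>S. (-1) ^ card S"]) auto

lemma sg_sq: "sg T b * sg T b = 1"
  unfolding sg_def by (simp flip: power_add)

lemma phi_pos: "0 < a \<Longrightarrow> phi (int a) w T = (if a \<in> T then sg T a * w (T - {a}) else 0)"
  by (simp add: phi_def sg_def)

lemma phi_neg: "0 < a \<Longrightarrow> phi (- int a) w T = (if a \<notin> T then sg T a * (-1)^a * w (insert a T) else 0)"
  by (simp add: phi_def sg_def)

lemma phi_zero: "phi 0 w T = (if 0 \<in> T then (-1)^(card T - 1) * w (T - {0}) else (-1)^card T / 2 * w (insert 0 T))"
  by (simp add: phi_def)

definition vinf :: "fvec \<Rightarrow> bool" where
  "vinf w \<longleftrightarrow> (\<forall>S. infinite S \<longrightarrow> w S = 0)"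

lemma vinf_phi: "vinf w \<Longrightarrow> vinf (phi j w)"
  by (auto simp: phi_def vinf_def)

lemma vinf_vac: "vinf vac"
  by (auto simp: vac_def vinf_def)

lemma car_pp: "finite T \<Longrightarrow> 0 < a \<Longrightarrow> 0 < b \<Longrightarrow>
   phi (int a) (phi (int b) w) T + phi (int b) (phi (int a) w) T = 0"
proof -
  assume f: "finite T" and a: "0 < a" and b: "0 < b"
  show ?thesis
  proof (cases "a = b \<or> a \<notin> T \<or> b \<notin> T")
    case True then show ?thesis using a b by (auto simp: phi_pos)
  next
    case False
    then have ab: "a \<noteq> b" "a \<in> T" "b \<in> T" by auto
    have e1: "sg T a = (if a < b then -1 else 1) * sg (T - {b}) a" using sg_remove f ab by blast
    have e2: "sg T b = (if b < a then -1 else 1) * sg (T - {a}) b" using sg_remove f ab by blast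
    have s: "T - {a} - {b} = T - {b} - {a}" by auto
    show ?thesis using ab a b unfolding phi_pos[OF a] phi_pos[OF b]
      by (simp add: e1 e2 s)
  qed
qed

lemma car_nn: "finite T \<Longrightarrow> 0 < a \<Longrightarrow> 0 < b \<Longrightarrow>
   phi (- int a) (phi (- int b) w) T + phi (- int b) (phi (- int a) w) T = 0"
proof -
  assume f: "finite T" and a: "0 < a" and b: "0 < b"
  show ?thesis
  proof (cases "a = b \<or> a \<in> T \<or> b \<in> T")
    case True then show ?thesis using a b by (auto simp: phi_neg)
  next
    case False
    then have ab: "a \<noteq> b" "a \<notin> T" "b \<notin> T" by auto
    have e1: "sg (insert b T) a = (if a < b then -1 else 1) * sg T a" using sg_insert f ab by blast
    have e2: "sg (insert a T) b = (if b < a then -1 else 1) * sg T b" using sg_insert f ab by blast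
    have s: "insert a (insert b T) = insert b (insert a T)" by auto
    show ?thesis using ab a b unfolding phi_neg[OF a] phi_neg[OF b]
      by (simp add: e1 e2 s)
  qed
qed

lemma car_pn: "finite T \<Longrightarrow> 0 < a \<Longrightarrow> 0 < b \<Longrightarrow>
   phi (int a) (phi (- int b) w) T + phi (- int b) (phi (int a) w) T
   = (if a = b then (-1)^a * w T else 0)"
proof -
  assume f: "finite T" and a: "0 < a" and b: "0 < b"
  show ?thesis
  proof (cases "a = b")
    case True
    then show ?thesis using a
      by (cases "a \<in> T") (auto simp: phi_pos phi_neg sg_self_remove sg_self_insert insert_absorb
             mult.assoc[symmetric] sg_sq)
  next
    case ab: False
    show ?thesis
    proof (cases "a \<in> T \<and> b \<notin> T")
      case False then show ?thesis using a b ab by (auto simp: phi_pos phi_neg)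
    next
      case True
      have e1: "sg (T - {a}) b = (if b < a then -1 else 1) * sg T b" using sg_remove' f True by blast
      have e2: "sg (insert b T) a = (if a < b then -1 else 1) * sg T a" using sg_insert f True by blast
      have s: "insert b (T - {a}) = insert b T - {a}" using ab by auto
      show ?thesis using ab a b True unfolding phi_neg[OF b] phi_pos[OF a]
        by (simp add: e1 e2 s)
    qed
  qed
qed

lemma m1_pred: "0 < n \<Longrightarrow> (-1::complex)^n + (-1)^(n - 1) = 0"
  by (cases n) auto

lemma car_0p: "finite T \<Longrightarrow> 0 < b \<Longrightarrow>
   phi 0 (phi (int b) w) T + phi (int b) (phi 0 w) T = 0"
proof -
  assume f: "finite T" and b: "0 < b"
  show ?thesis
  proof (cases "b \<in> T")
    case False then show ?thesis using b by (auto simp: phi_pos phi_zero)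
  next
    case bT: True
    have e1: "sg (T - {0}) b = sg T b" if "0 \<in> T" using sg_remove'[OF f that, of b] by simp
    have e2: "sg (insert 0 T) b = sg T b" if "0 \<notin> T" using sg_insert[OF f that, of b] by simp
    have cT: "card (T - {b}) = card T - 1" using bT f by simp
    have cpos: "card T > 0" using bT f card_gt_0_iff by blast
    show ?thesis
    proof (cases "0 \<in> T")
      case True
      have c2: "card T \<ge> 2"
      proof -
        have "{0, b} \<subseteq> T" using True bT by auto
        then have "card {0,b} \<le> card T" using f card_mono by blast
        then show ?thesis using b by simp
      qed
      have s: "T - {0} - {b} = T - {b} - {0}" by auto
      have m: "(-1::complex)^(card T - 1) + (-1)^(card T - 1 - 1) = 0"
        using m1_pred[of "card T - 1"] c2 by simp
      have "phi 0 (phi (int b) w) T + phi (int b) (phi 0 w) T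
          = sg T b * w (T - {b} - {0}) * ((-1)^(card T - 1) + (-1)^(card T - 1 - 1))"
        using True bT b unfolding phi_zero phi_pos[OF b] by (simp add: e1 s cT algebra_simps)
      then show ?thesis using m by simp
    next
      case False
      have s: "insert 0 T - {b} = insert 0 (T - {b})" using b by auto
      have "phi 0 (phi (int b) w) T + phi (int b) (phi 0 w) T
          = sg T b * w (insert 0 (T - {b})) * (((-1)^(card T) + (-1)^(card T - 1)) / 2)"
        using False bT b unfolding phi_zero phi_pos[OF b] by (simp add: e2 s cT algebra_simps add_divide_distrib)
      also have "\<dots> = 0" using m1_pred[OF cpos] by simp
      finally show ?thesis .
    qed
  qed
qed

lemma car_0n: "finite T \<Longrightarrow> 0 < b \<Longrightarrow>
   phi 0 (phi (- int b) w) T + phi (- int b) (phi 0 w) T = 0"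
proof -
  assume f: "finite T" and b: "0 < b"
  show ?thesis
  proof (cases "b \<in> T")
    case True then show ?thesis using b by (auto simp: phi_neg phi_zero)
  next
    case bT: False
    have e1: "sg (T - {0}) b = sg T b" if "0 \<in> T" using sg_remove'[OF f that, of b] by simp
    have e2: "sg (insert 0 T) b = sg T b" if "0 \<notin> T" using sg_insert[OF f that, of b] by simp
    have cT: "card (insert b T) = Suc (card T)" using bT f by simp
    show ?thesis
    proof (cases "0 \<in> T")
      case True
      have cpos: "card T > 0" using True f card_gt_0_iff by blast
      have s: "insert b (T - {0}) = insert b T - {0}" using b by auto
      have "phi 0 (phi (- int b) w) T + phi (- int b) (phi 0 w) T
          = sg T b * (-1)^b * w (insert b T - {0}) * ((-1)^(card T) + (-1)^(card T - 1))"
        using True bT b unfolding phi_zero phi_neg[OF b] by (simp add: e1 s cT algebra_simps)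
      then show ?thesis using m1_pred[OF cpos] by simp
    next
      case False
      have s: "insert b (insert 0 T) = insert 0 (insert b T)" by auto
      have "phi 0 (phi (- int b) w) T + phi (- int b) (phi 0 w) T
          = sg T b * (-1)^b * w (insert 0 (insert b T)) * ((-1)^(card T) + (-1)^(Suc (card T))) / 2"
        using False bT b unfolding phi_zero phi_neg[OF b] by (simp add: e2 s cT algebra_simps add_divide_distrib)
      then show ?thesis by simp
    qed
  qed
qed

lemma car_00: "finite T \<Longrightarrow> phi 0 (phi 0 w) T + phi 0 (phi 0 w) T = w T"
proof (cases "0 \<in> T")
  case True
  assume f: "finite T"
  have cpos: "card T > 0" using True f card_gt_0_iff by blast
  have c: "card (T - {0}) = card T - 1" using True f by simp
  have "phi 0 (phi 0 w) T = ((-1)^(card T - 1) * (-1)^(card T - 1)) / 2 * w T"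
    using True unfolding phi_zero by (simp add: c insert_absorb)
  also have "\<dots> = w T / 2" by (simp flip: power_add)
  finally show ?thesis by (simp add: ac_simps)
next
  case False
  assume f: "finite T"
  have c: "card (insert 0 T) = Suc (card T)" using False f by simp
  have "phi 0 (phi 0 w) T = ((-1)^(card T) * (-1)^(card T)) / 2 * w T"
    using False unfolding phi_zero by (simp add: c)
  also have "\<dots> = w T / 2" by (simp flip: power_add)
  finally show ?thesis by (simp add: ac_simps)
qed

lemma int_trich:
  fixes i :: int
  obtains (p) a where "0 < a" "i = int a" | (n) a where "0 < a" "i = - int a" | (z) "i = 0"
proof -
  consider "i > 0" | "i < 0" | "i = 0" by linarith
  then show thesis
  proof cases
    case 1 then show ?thesis using p[of "nat i"] by auto
  next
    case 2 then show ?thesis using n[of "nat (- i)"] by auto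
  qed (use z in auto)
qed

lemma car_fin: "finite T \<Longrightarrow>
  phi i (phi j w) T + phi j (phi i w) T = (if i + j = 0 then (-1)^nat \<bar>i\<bar> else 0) * w T"
proof -
  assume f: "finite T"
  show ?thesis
  proof (cases i rule: int_trich)
    case (p a)
    then show ?thesis
    proof (cases j rule: int_trich)
      case (p b) then show ?thesis using car_pp[OF f \<open>0<a\<close> \<open>0<b\<close>] \<open>i = int a\<close> \<open>0<a\<close> by simp
    next
      case (n b) then show ?thesis using car_pn[OF f \<open>0<a\<close> \<open>0<b\<close>, of w] \<open>i = int a\<close> \<open>0<a\<close> by simp
    next
      case z then show ?thesis using car_0p[OF f \<open>0<a\<close>, of w] \<open>i = int a\<close> \<open>0<a\<close> by (simp add: add.commute)
    qed
  next
    case (n a)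
    then show ?thesis
    proof (cases j rule: int_trich)
      case (p b) then show ?thesis using car_pn[OF f \<open>0<b\<close> \<open>0<a\<close>, of w] \<open>i = - int a\<close> \<open>0<a\<close>
        by (auto simp: add.commute)
    next
      case (n b) then show ?thesis using car_nn[OF f \<open>0<a\<close> \<open>0<b\<close>] \<open>i = - int a\<close> \<open>0<a\<close> by simp
    next
      case z then show ?thesis using car_0n[OF f \<open>0<a\<close>, of w] \<open>i = - int a\<close> \<open>0<a\<close> by (simp add: add.commute)
    qed
  next
    case z
    then show ?thesis
    proof (cases j rule: int_trich)
      case (p b) then show ?thesis using car_0p[OF f \<open>0<b\<close>, of w] \<open>i = 0\<close> by simp
    next
      case (n b) then show ?thesis using car_0n[OF f \<open>0<b\<close>, of w] \<open>i = 0\<close> by simp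
    next
      case z then show ?thesis using car_00[OF f, of w] \<open>i = 0\<close> by simp
    qed
  qed
qed

lemma car: "vinf w \<Longrightarrow>
  phi i (phi j w) T + phi j (phi i w) T = (if i + j = 0 then (-1)^nat \<bar>i\<bar> else 0) * w T"
proof (cases "finite T")
  case True then show ?thesis by (rule car_fin)
next
  case False
  assume v: "vinf w"
  have "vinf (phi i (phi j w))" "vinf (phi j (phi i w))" using v by (simp_all add: vinf_phi)
  then show ?thesis using False v unfolding vinf_def by simp
qed

lemma vev2_sym: "vev2 i j + vev2 j i = (if i + j = 0 then (-1)^nat \<bar>i\<bar> else 0)"
  using car[OF vinf_vac, of i j "{}"] by (simp add: vev2_def vac_def)

lemma nord_anti: "vinf w \<Longrightarrow> nord j i w T = - nord i j w T"
proof -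
  assume v: "vinf w"
  have "nord i j w T + nord j i w T = (phi i (phi j w) T + phi j (phi i w) T) - (vev2 i j + vev2 j i) * w T"
    unfolding nord_def by (simp add: algebra_simps)
  also have "\<dots> = 0" unfolding car[OF v, of i j T] vev2_sym[of i j] by simp
  finally have "nord i j w T + nord j i w T = 0" .
  then show ?thesis by (simp add: eq_neg_iff_add_eq_0 add.commute)
qed



definition bnd :: "nat \<Rightarrow> fvec \<Rightarrow> bool" where
  "bnd M w \<longleftrightarrow> (\<forall>S. w S \<noteq> 0 \<longrightarrow> S \<subseteq> {..<M})"

lemma bnd_vinf: "bnd M w \<Longrightarrow> vinf w"
  unfolding bnd_def vinf_def using finite_nat_iff_bounded by blast

lemma bnd_mono: "bnd M w \<Longrightarrow> M \<le> M' \<Longrightarrow> bnd M' w"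
  unfolding bnd_def by fastforce

lemma bnd_phi: "bnd M w \<Longrightarrow> bnd (max M (Suc (nat \<bar>n\<bar>))) (phi n w)"
proof -
  assume b: "bnd M w"
  let ?M = "max M (Suc (nat \<bar>n\<bar>))"
  have w: "w S \<noteq> 0 \<Longrightarrow> x \<in> S \<Longrightarrow> x < M" for S x using b unfolding bnd_def by blast
  show ?thesis unfolding bnd_def
  proof (intro allI impI subsetI)
    fix S x assume ne: "phi n w S \<noteq> 0" and x: "x \<in> S"
    show "x \<in> {..<?M}"
    proof (cases "x = nat \<bar>n\<bar>")
      case True then show ?thesis by simp
    next
      case False
      have "x < M"
      proof (cases n rule: int_trich)
        case (p a)
        then have "w (S - {a}) \<noteq> 0" using ne by (simp add: phi_pos split: if_splits)
        moreover have "x \<in> S - {a}" using x False p by simp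
        ultimately show ?thesis by (rule w)
      next
        case (n a)
        then have "w (insert a S) \<noteq> 0" using ne by (simp add: phi_neg split: if_splits)
        moreover have "x \<in> insert a S" using x by simp
        ultimately show ?thesis by (rule w)
      next
        case z
        then have "w (S - {0}) \<noteq> 0 \<or> w (insert 0 S) \<noteq> 0" using ne by (simp add: phi_zero split: if_splits)
        moreover have "x \<in> S - {0}" "x \<in> insert 0 S" using x False z by auto
        ultimately show ?thesis using w by blast
      qed
      then show ?thesis by simp
    qed
  qed
qed

lemma fock_bnd: "v \<in> fock \<Longrightarrow> \<exists>M. bnd M v"
proof -
  assume "v \<in> fock"
  then have f1: "finite {S. v S \<noteq> 0}" and f2: "\<And>S. v S \<noteq> 0 \<Longrightarrow> finite S" unfolding fock_def by auto
  have "finite (\<Union> {S. v S \<noteq> 0})" using f1 f2 by (intro finite_Union) auto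
  then obtain M where M: "\<Union> {S. v S \<noteq> 0} \<subseteq> {..<M}" using finite_nat_iff_bounded by meson
  have "bnd M v" unfolding bnd_def
  proof (intro allI impI)
    fix S assume "v S \<noteq> 0"
    then have "S \<subseteq> \<Union> {S. v S \<noteq> 0}" by blast
    then show "S \<subseteq> {..<M}" using M by (rule order_trans)
  qed
  then show ?thesis by blast
qed

lemma nord_far:
  assumes b: "bnd M w" and T: "T \<subseteq> {..<M}" and i: "int M \<le> \<bar>i\<bar>" and j: "int M \<le> \<bar>j\<bar>" and M: "0 < M"
  shows "nord i j w T = 0"
proof -
  have T': "x \<in> T \<Longrightarrow> x < M" for x using T by auto
  show ?thesis
  proof (cases j rule: int_trich)
    case (p b')
    have bM: "M \<le> b'" using j p by simp
    show ?thesis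
    proof (cases i rule: int_trich)
      case (p a)
      have aT: "a \<notin> T" using T' i p by force
      show ?thesis using p \<open>j = int b'\<close> \<open>0 < b'\<close> aT
        by (simp add: nord_def vev2_def phi_pos)
    next
      case (n a)
      have aT: "a \<notin> T" using T' i n by force
      have bT: "b' \<notin> T" using T' bM by force
      have aM: "M \<le> a" using i n by simp
      have e: "{t\<in>T. t > a} = {}" using T' aM by force
      have sg1: "sg T a = 1" unfolding sg_def e by simp
      show ?thesis
      proof (cases "a = b'")
        case True
        have sge: "sg {} b' = 1" by (simp add: sg_def)
        have sg1': "sg T b' = 1" using sg1 True by simp
        show ?thesis using n \<open>j = int b'\<close> \<open>0 < b'\<close> aT True
          by (simp add: nord_def vev2_def phi_pos phi_neg sg_self_insert sg1' sge vac_def insert_absorb)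
      next
        case False
        then show ?thesis using n \<open>j = int b'\<close> \<open>0 < b'\<close> aT bT
          by (simp add: nord_def vev2_def phi_pos phi_neg vac_def)
      qed
    qed (use i M in auto)
  next
    case (n b')
    have bM: "M \<le> b'" using j n by simp
    have wz: "w S = 0" if "b' \<in> S" for S using b bM that unfolding bnd_def by force
    show ?thesis
    proof (cases i rule: int_trich)
      case (p a)
      have aT: "a \<notin> T" using T' i p by force
      show ?thesis using p \<open>j = - int b'\<close> \<open>0 < b'\<close> aT
        by (simp add: nord_def vev2_def phi_pos)
    next
      case (n a)
      show ?thesis using n \<open>j = - int b'\<close> \<open>0 < b'\<close> wz
        by (simp add: nord_def vev2_def phi_neg vac_def)
    qed (use i M in auto)
  qed (use j M in auto)
qed



lemma Dz_pow: "(Dz ^^ m) f n = of_int n ^ m * f n"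
  by (induction m arbitrary: n) (auto simp: Dz_def)

lemma negDz_pow: "((\<lambda>f n. - Dz f n) ^^ m) f n = (- of_int n) ^ m * f n"
  by (induction m arbitrary: n) (auto simp: Dz_def)

lemma zD_mono: "zD k m (mono j) n = of_int (n - k) ^ m * mono j (n - k)"
  by (simp add: zD_def zpow_def Dz_pow)

lemma iota_mono: "iota_basis k m (mono j) n = (- of_int n) ^ m * ((-1) ^ nat \<bar>k\<bar> * mono j (n - k))"
  by (simp add: iota_basis_def zpow_def negDz_pow)

lemma wop_sum: "finite {p. c p \<noteq> 0} \<Longrightarrow>
  wop c f n = (\<Sum>q\<in>{p. c p \<noteq> 0}. c q * zD (fst q) (snd q) f n)"
  unfolding wop_def by (rule infsum_fin) auto

lemma wiota_sum: "finite {p. c p \<noteq> 0} \<Longrightarrow>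
  wiota c f n = (\<Sum>q\<in>{p. c p \<noteq> 0}. c q * iota_basis (fst q) (snd q) f n)"
  unfolding wiota_def by (rule infsum_fin) auto

definition Acoef :: "(lpoly \<Rightarrow> lpoly) \<Rightarrow> int \<Rightarrow> int \<Rightarrow> complex" where
  "Acoef L i j = 1/2 * (-1) ^ nat \<bar>i\<bar> * L (mono j) (- i)"

lemma neg1_abs: "(-1::complex) ^ nat \<bar>x\<bar> = (if even x then 1 else -1)"
proof -
  have "even (nat \<bar>x\<bar>) \<longleftrightarrow> even x" by (simp add: even_nat_iff)
  then show ?thesis by (auto simp: neg_one_even_power neg_one_odd_power)
qed

lemma A_iota: "finite {p. c p \<noteq> 0} \<Longrightarrow> Acoef (wiota c) i j = Acoef (wop c) j i"
  unfolding Acoef_def wiota_sum wop_sum sum_distrib_left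
proof (rule sum.cong[OF refl])
  fix q assume "q \<in> {p. c p \<noteq> 0}"
  obtain k m where q: "q = (k, m)" by fastforce
  show "1 / 2 * (-1) ^ nat \<bar>i\<bar> * (c q * iota_basis (fst q) (snd q) (mono j) (- i)) =
        1 / 2 * (-1) ^ nat \<bar>j\<bar> * (c q * zD (fst q) (snd q) (mono i) (- j))"
  proof (cases "j = - i - k")
    case True
    have sgn: "(-1::complex) ^ nat \<bar>i\<bar> * (-1) ^ nat \<bar>k\<bar> = (-1) ^ nat \<bar>j\<bar>"
      using True by (auto simp: neg1_abs)
    have m1: "mono j (- i - k) = 1" "mono i (- j - k) = 1" using True by (auto simp: mono_def)
    have e: "- j - k = i" using True by simp
    have "1 / 2 * (-1) ^ nat \<bar>i\<bar> * (c q * iota_basis (fst q) (snd q) (mono j) (- i))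
       = 1 / 2 * ((-1) ^ nat \<bar>i\<bar> * (-1) ^ nat \<bar>k\<bar>) * (c q * of_int i ^ m)"
      unfolding q fst_conv snd_conv iota_mono m1 by (simp add: algebra_simps)
    also have "\<dots> = 1 / 2 * (-1) ^ nat \<bar>j\<bar> * (c q * zD (fst q) (snd q) (mono i) (- j))"
      unfolding sgn q fst_conv snd_conv zD_mono e by (simp add: mono_def)
    finally show ?thesis .
  next
    case False
    then show ?thesis unfolding q fst_conv snd_conv iota_mono zD_mono by (auto simp: mono_def)
  qed
qed

lemma A_tilde: "Acoef (wtilde c) i j = (Acoef (wop c) i j - Acoef (wiota c) i j) / 2"
  by (simp add: Acoef_def wtilde_def algebra_simps diff_divide_distrib)

lemma A_supp: "finite {p. c p \<noteq> 0} \<Longrightarrow> Acoef (wop c) i j \<noteq> 0 \<Longrightarrow> \<exists>q\<in>{p. c p \<noteq> 0}. j = - i - fst q"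
proof -
  assume f: "finite {p. c p \<noteq> 0}" and ne: "Acoef (wop c) i j \<noteq> 0"
  then have "(\<Sum>q\<in>{p. c p \<noteq> 0}. c q * zD (fst q) (snd q) (mono j) (- i)) \<noteq> 0"
    unfolding Acoef_def wop_sum[OF f] by auto
  then obtain q where "q \<in> {p. c p \<noteq> 0}" "c q * zD (fst q) (snd q) (mono j) (- i) \<noteq> 0"
    using sum.neutral by (metis (no_types, lifting))
  moreover from this(2) have "j = - i - fst q" unfolding zD_mono by (auto simp: mono_def split: if_splits)
  ultimately show ?thesis by blast
qed

lemma hatB_A: "hatB L w T = (\<Sum>\<^sub>\<infinity>p. Acoef L (fst p) (snd p) * nord (fst p) (snd p) w T)"
  by (simp add: hatB_def Acoef_def)



lemma main_eq:
  assumes f: "finite {p. c p \<noteq> 0}" and b: "bnd M w"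
  shows "hatB (wop c) w T = hatB (wtilde c) w T"
proof (cases "finite T")
  case False
  have v: "vinf w" using b by (rule bnd_vinf)
  have N0: "nord i j w T = 0" for i j
  proof -
    have "vinf (phi i (phi j w))" using v by (simp add: vinf_phi)
    then show ?thesis using v False unfolding nord_def vinf_def by simp
  qed
  show ?thesis unfolding hatB_A N0 by simp
next
  case True
  have v: "vinf w" using b by (rule bnd_vinf)
  obtain M2 where M2: "T \<subseteq> {..<M2}" using True finite_nat_iff_bounded by meson
  define M1 where "M1 = max (max M M2) 1"
  have b1: "bnd M1 w" using b bnd_mono M1_def by simp
  have T1: "T \<subseteq> {..<M1}" using M2 M1_def by auto
  have M1p: "0 < M1" using M1_def by simp
  define S where "S = {p. c p \<noteq> 0}"
  define R0 where "R0 = (\<Sum>q\<in>S. \<bar>fst q\<bar>)"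
  have R0: "\<bar>fst q\<bar> \<le> R0" if "q \<in> S" for q
    unfolding R0_def using f S_def that by (intro member_le_sum) auto
  define R where "R = int M1 + R0"
  define B where "B = {-R..R} \<times> {-R..R}"
  have fB: "finite B" unfolding B_def by simp
  define N where "N i j = nord i j w T" for i j
  define g where "g p = Acoef (wop c) (fst p) (snd p) * N (fst p) (snd p)" for p
  have gB: "p \<in> B" if "g p \<noteq> 0" for p
  proof -
    obtain i j where p: "p = (i, j)" by fastforce
    have A: "Acoef (wop c) i j \<noteq> 0" and Nn: "N i j \<noteq> 0" using that by (auto simp: g_def p)
    obtain q where q: "q \<in> S" "j = - i - fst q" using A_supp[OF f A] S_def by blast
    have s: "\<bar>i + j\<bar> \<le> R0" using R0[OF q(1)] q(2) by simp
    have "\<not> (int M1 \<le> \<bar>i\<bar> \<and> int M1 \<le> \<bar>j\<bar>)"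
    proof
      assume "int M1 \<le> \<bar>i\<bar> \<and> int M1 \<le> \<bar>j\<bar>"
      then have "nord i j w T = 0" using nord_far[OF b1 T1 _ _ M1p] by blast
      then show False using Nn unfolding N_def by simp
    qed
    then show ?thesis unfolding B_def p R_def using s by auto
  qed
  have Nanti: "N j i = - N i j" for i j unfolding N_def by (rule nord_anti[OF v])
  define h where "h p = Acoef (wtilde c) (fst p) (snd p) * N (fst p) (snd p)" for p
  have hg: "h p = (g p + g (prod.swap p)) / 2" for p
    unfolding h_def g_def A_tilde A_iota[OF f] prod.swap_def fst_conv snd_conv Nanti[of "fst p" "snd p"]
    by (simp add: algebra_simps diff_divide_distrib add_divide_distrib)
  have swB: "prod.swap p \<in> B \<longleftrightarrow> p \<in> B" for p unfolding B_def by (cases p) auto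
  have hB: "p \<in> B" if "h p \<noteq> 0" for p
  proof -
    have "g p \<noteq> 0 \<or> g (prod.swap p) \<noteq> 0" using that hg by auto
    then show ?thesis using gB swB by blast
  qed
  have g0: "g p = 0" if "p \<notin> B" for p using gB that by blast
  have h0: "h p = 0" if "p \<notin> B" for p using hB that by blast
  have "hatB (wop c) w T = (\<Sum>\<^sub>\<infinity>p. g p)" unfolding hatB_A g_def N_def ..
  also have "\<dots> = sum g B" by (rule infsum_fin[OF fB g0])
  finally have e1: "hatB (wop c) w T = sum g B" .
  have "hatB (wtilde c) w T = (\<Sum>\<^sub>\<infinity>p. h p)" unfolding hatB_A h_def N_def ..
  also have "\<dots> = sum h B" by (rule infsum_fin[OF fB h0])
  finally have e2: "hatB (wtilde c) w T = sum h B" .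
  have sw: "sum (\<lambda>p. g (prod.swap p)) B = sum g B"
    by (rule sum.reindex_bij_witness[of _ prod.swap prod.swap]) (auto simp: swB)
  have "sum h B = (sum g B + sum (\<lambda>p. g (prod.swap p)) B) / 2"
    unfolding hg by (simp add: sum.distrib flip: sum_divide_distrib)
  then show ?thesis using e1 e2 sw by simp
qed


theorem corollary3p5:
  fixes c :: "int \<times> nat \<Rightarrow> complex" and n :: int and v :: fvec
  assumes "finite {p. c p \<noteq> 0}"
    and "v \<in> fock"
  shows "fcomm (hatB (wop c)) (phi n) v = fcomm (hatB (wtilde c)) (phi n) v"
proof -
  obtain M where M: "bnd M v" using fock_bnd[OF assms(2)] by blast
  have e1: "hatB (wop c) (phi n v) = hatB (wtilde c) (phi n v)"
    using main_eq[OF assms(1) bnd_phi[OF M]] by (rule ext)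
  have e2: "hatB (wop c) v = hatB (wtilde c) v"
    using main_eq[OF assms(1) M] by (rule ext)
  show ?thesis unfolding fcomm_def e1 e2 ..
qed

end
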